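(* Let $\nu_1,\dots,\nu_d>0$ with $\sum_{i=1}^d\nu_i=d$, and let $\kappa\ge1$ satisfy $\nu_{\max}/\nu_{\min}\le\kappa$, where $\nu_{\max}=\max_i\nu_i$, $\nu_{\min}=\min_i\nu_i$. Then $$\mathbb{E}_R\Big[\sum_{i=1}^d\log\sum_{j=1}^dR_{ij}^2\nu_j\Big]\le\frac{2}{(d+2)\kappa^2}\sum_{i=1}^d\log\nu_i,$$ where the expectation is over $R$ drawn from the uniform (Haar) distribution on the orthogonal group $O(d)$. *)

theory Defs
  imports "HOL-Analysis.Analysis" "HOL-Probability.Probability"
begin

text \<open>Uniform (Haar) probability distribution on the orthogonal group O(d), realised as a
Borel probability measure on d x d real matrices, concentrated on the orthogonal matrices and
invariant under left multiplication by every orthogonal matrix. (Such a measure exists and is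
unique: it is the normalised Haar measure of O(d).)\<close>

definition haar_orthogonal :: "(real^'n^'n) measure \<Rightarrow> bool" where
  "haar_orthogonal M \<longleftrightarrow>
     prob_space M \<and>
     sets M = sets borel \<and>
     (AE R in M. orthogonal_matrix R) \<and>
     (\<forall>Q::real^'n^'n. orthogonal_matrix Q \<longrightarrow> distr M M (\<lambda>R. Q ** R) = M)"

end

theory Submission
  imports Defs
begin

definition tt :: "real^'n \<Rightarrow> real^'n^'n \<Rightarrow> 'n \<Rightarrow> real" where
  "tt v R i = (\<Sum>j\<in>UNIV. (R $ i $ j)\<^sup>2 * v $ j)"

definition AA :: "real^'n \<Rightarrow> real^'n^'n \<Rightarrow> 'n \<Rightarrow> 'n \<Rightarrow> real" where
  "AA v R k l = (\<Sum>j\<in>UNIV. R $ k $ j * R $ l $ j * v $ j)"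

definition phi :: "real^'n \<Rightarrow> real^'n^'n \<Rightarrow> real" where
  "phi v R = (\<Sum>i\<in>UNIV. (tt v R i)\<^sup>2)"

lemma orth_rows:
  fixes R :: "real^'n^'n"
  assumes "orthogonal_matrix R"
  shows "(\<Sum>j\<in>UNIV. R $ i $ j * R $ i' $ j) = (if i = i' then 1 else 0)"
proof -
  have "R ** transpose R = mat 1" using assms unfolding orthogonal_matrix_def by simp
  then have "(R ** transpose R) $ i $ i' = mat 1 $ i $ i'" by simp
  then show ?thesis by (simp add: matrix_matrix_mult_def transpose_def mat_def)
qed

lemma orth_cols:
  fixes R :: "real^'n^'n"
  assumes "orthogonal_matrix R"
  shows "(\<Sum>k\<in>UNIV. R $ k $ j * R $ k $ j') = (if j = j' then 1 else 0)"
proof -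
  have "transpose R ** R = mat 1" using assms unfolding orthogonal_matrix_def by simp
  then have "(transpose R ** R) $ j $ j' = mat 1 $ j $ j'" by simp
  then show ?thesis by (simp add: matrix_matrix_mult_def transpose_def mat_def)
qed

lemma tt_bounds:
  fixes R :: "real^'n^'n"
  assumes "orthogonal_matrix R" and "\<And>j. a \<le> v $ j" and "\<And>j. v $ j \<le> b"
  shows "a \<le> tt v R i" "tt v R i \<le> b"
proof -
  have s: "(\<Sum>j\<in>UNIV. (R $ i $ j)\<^sup>2) = 1"
    using orth_rows[OF assms(1), of i i] by (simp add: power2_eq_square)
  have "a = (\<Sum>j\<in>UNIV. (R $ i $ j)\<^sup>2 * a)" by (simp add: sum_distrib_right[symmetric] s)
  also have "\<dots> \<le> tt v R i" unfolding tt_def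
    by (intro sum_mono mult_left_mono assms) auto
  finally show "a \<le> tt v R i" .
  have "tt v R i \<le> (\<Sum>j\<in>UNIV. (R $ i $ j)\<^sup>2 * b)" unfolding tt_def
    by (intro sum_mono mult_left_mono assms) auto
  also have "\<dots> = b" by (simp add: sum_distrib_right[symmetric] s)
  finally show "tt v R i \<le> b" .
qed

lemma sum_tt:
  fixes R :: "real^'n^'n"
  assumes "orthogonal_matrix R"
  shows "(\<Sum>i\<in>UNIV. tt v R i) = (\<Sum>j\<in>UNIV. v $ j)"
proof -
  have "(\<Sum>i\<in>UNIV. tt v R i) = (\<Sum>j\<in>UNIV. (\<Sum>i\<in>UNIV. R $ i $ j * R $ i $ j) * v $ j)"
    unfolding tt_def power2_eq_square sum_distrib_right by (rule sum.swap)
  also have "\<dots> = (\<Sum>j\<in>UNIV. v $ j)" using orth_cols[OF assms] by simp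
  finally show ?thesis .
qed

lemma AA_diag: "AA v R k k = tt v R k"
  unfolding AA_def tt_def by (simp add: power2_eq_square)

lemma swap4:
  "(\<Sum>k\<in>A. \<Sum>l\<in>B. \<Sum>j\<in>C. \<Sum>j'\<in>D. F k l j j') =
   (\<Sum>j\<in>C. \<Sum>j'\<in>D. \<Sum>k\<in>A. \<Sum>l\<in>B. F k l j j')"
proof -
  have "(\<Sum>k\<in>A. \<Sum>l\<in>B. \<Sum>j\<in>C. \<Sum>j'\<in>D. F k l j j') =
        (\<Sum>k\<in>A. \<Sum>j\<in>C. \<Sum>l\<in>B. \<Sum>j'\<in>D. F k l j j')"
    by (rule sum.cong[OF refl], rule sum.swap)
  also have "\<dots> = (\<Sum>k\<in>A. \<Sum>j\<in>C. \<Sum>j'\<in>D. \<Sum>l\<in>B. F k l j j')"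
    by (rule sum.cong[OF refl], rule sum.cong[OF refl], rule sum.swap)
  also have "\<dots> = (\<Sum>j\<in>C. \<Sum>k\<in>A. \<Sum>j'\<in>D. \<Sum>l\<in>B. F k l j j')"
    by (rule sum.swap)
  also have "\<dots> = (\<Sum>j\<in>C. \<Sum>j'\<in>D. \<Sum>k\<in>A. \<Sum>l\<in>B. F k l j j')"
    by (rule sum.cong[OF refl], rule sum.swap)
  finally show ?thesis .
qed

lemma sum_prod_aux:
  "(\<Sum>k\<in>A. \<Sum>l\<in>B. a k * b l * (c::real)) = (\<Sum>k\<in>A. a k) * (\<Sum>l\<in>B. b l) * c"
  by (subst sum_product) (simp add: sum_distrib_right)

lemma sum_AA_sq:
  fixes R :: "real^'n^'n"
  assumes "orthogonal_matrix R"
  shows "(\<Sum>k\<in>UNIV. \<Sum>l\<in>UNIV. (AA v R k l)\<^sup>2) = (\<Sum>j\<in>UNIV. (v $ j)\<^sup>2)"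
proof -
  have "(\<Sum>k\<in>UNIV. \<Sum>l\<in>UNIV. (AA v R k l)\<^sup>2) =
     (\<Sum>k\<in>UNIV. \<Sum>l\<in>UNIV. \<Sum>j\<in>UNIV. \<Sum>j'\<in>UNIV.
        (R $ k $ j * R $ k $ j') * (R $ l $ j * R $ l $ j') * (v $ j * v $ j'))"
    unfolding AA_def power2_eq_square sum_product
    by (intro sum.cong refl) (simp add: algebra_simps)
  also have "\<dots> = (\<Sum>j\<in>UNIV. \<Sum>j'\<in>UNIV. \<Sum>k\<in>UNIV. \<Sum>l\<in>UNIV.
        (R $ k $ j * R $ k $ j') * (R $ l $ j * R $ l $ j') * (v $ j * v $ j'))"
    by (rule swap4)
  also have "\<dots> = (\<Sum>j\<in>UNIV. \<Sum>j'\<in>UNIV.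
        (\<Sum>k\<in>UNIV. R $ k $ j * R $ k $ j') * (\<Sum>l\<in>UNIV. R $ l $ j * R $ l $ j') * (v $ j * v $ j'))"
    by (intro sum.cong refl sum_prod_aux)
  also have "\<dots> = (\<Sum>j\<in>UNIV. (v $ j)\<^sup>2)"
  proof -
    have h: "\<And>j j'. (\<Sum>k\<in>UNIV. R $ k $ j * R $ k $ j') * (\<Sum>l\<in>UNIV. R $ l $ j * R $ l $ j') *
        (v $ j * v $ j') = (if j' = j then (v $ j)\<^sup>2 else 0)"
      using orth_cols[OF assms] by (simp add: power2_eq_square)
    show ?thesis by (simp only: h sum.delta) simp
  qed
  finally show ?thesis .
qed

lemma if_mult0: "(if P then a else 0) * (b::real) = (if P then a * b else 0)" by simp
lemma mult_if0: "(b::real) * (if P then a else 0) = (if P then b * a else 0)" by simp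

definition hs :: real where "hs = inverse (sqrt 2)"

lemma hs_sq: "hs * hs = 1/2"
  unfolding hs_def by (simp add: inverse_eq_divide)

lemma hs_sq2: "hs * (hs * x) = x / 2"
  using hs_sq by (metis mult.assoc mult.commute times_divide_eq_right mult_1)

definition hada :: "'n \<Rightarrow> 'n \<Rightarrow> real^'n^'n" where
  "hada k l = (\<chi> i m. if i = k then (if m = k then hs else 0) + (if m = l then hs else 0)
                 else if i = l then (if m = k then hs else 0) - (if m = l then hs else 0)
                 else (if m = i then 1 else 0))"

lemma hada_mult:
  fixes R :: "real^'n^'n"
  assumes "k \<noteq> l"
  shows "(hada k l ** R) $ i $ j = (if i = k then hs * (R $ k $ j + R $ l $ j)
           else if i = l then hs * (R $ k $ j - R $ l $ j) else R $ i $ j)"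
  using assms
  by (simp add: matrix_matrix_mult_def hada_def distrib_right left_diff_distrib sum.distrib
       sum_subtractf if_mult0 mult_if0 distrib_left right_diff_distrib)

lemma hada_sym: "transpose (hada k l) = hada k l"
  by (auto simp: vec_eq_iff transpose_def hada_def)

lemma hada_orth:
  assumes "k \<noteq> l"
  shows "orthogonal_matrix (hada k l)"
proof -
  have "hada k l ** hada k l = mat 1"
    unfolding vec_eq_iff hada_mult[OF assms]
    using assms by (auto simp: mat_def hada_def algebra_simps hs_sq hs_sq2)
  then show ?thesis unfolding orthogonal_matrix_def hada_sym by simp
qed

lemma tt_hada_k:
  fixes R :: "real^'n^'n"
  assumes "k \<noteq> l"
  shows "tt v (hada k l ** R) k = (tt v R k + tt v R l) / 2 + AA v R k l"
proof -
  have "tt v (hada k l ** R) k = (\<Sum>j\<in>UNIV. ((R $ k $ j)\<^sup>2 * v $ j) / 2 + ((R $ l $ j)\<^sup>2 * v $ j) / 2 + R $ k $ j * R $ l $ j * v $ j)"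
    unfolding tt_def using assms
    by (intro sum.cong refl) (simp add: hada_mult power_mult_distrib power2_eq_square algebra_simps hs_sq hs_sq2)
  also have "\<dots> = (tt v R k + tt v R l) / 2 + AA v R k l"
    by (simp add: tt_def AA_def sum.distrib sum_divide_distrib add_divide_distrib)
  finally show ?thesis .
qed

lemma tt_hada_l:
  fixes R :: "real^'n^'n"
  assumes "k \<noteq> l"
  shows "tt v (hada k l ** R) l = (tt v R k + tt v R l) / 2 - AA v R k l"
proof -
  have "tt v (hada k l ** R) l = (\<Sum>j\<in>UNIV. ((R $ k $ j)\<^sup>2 * v $ j) / 2 + ((R $ l $ j)\<^sup>2 * v $ j) / 2 - R $ k $ j * R $ l $ j * v $ j)"
    unfolding tt_def using assms
    by (intro sum.cong refl) (simp add: hada_mult power_mult_distrib power2_eq_square algebra_simps hs_sq hs_sq2)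
  also have "\<dots> = (tt v R k + tt v R l) / 2 - AA v R k l"
    by (simp add: tt_def AA_def sum.distrib sum_subtractf sum_divide_distrib add_divide_distrib)
  finally show ?thesis .
qed

lemma tt_hada_other:
  fixes R :: "real^'n^'n"
  assumes "k \<noteq> l" "i \<noteq> k" "i \<noteq> l"
  shows "tt v (hada k l ** R) i = tt v R i"
  unfolding tt_def using assms by (simp add: hada_mult)

lemma phi_hada:
  fixes R :: "real^'n^'n"
  assumes "k \<noteq> l"
  shows "phi v (hada k l ** R) - phi v R = 2 * (AA v R k l)\<^sup>2 - (tt v R k - tt v R l)\<^sup>2 / 2"
proof -
  have split: "\<And>f::'n \<Rightarrow> real. (\<Sum>i\<in>UNIV. f i) = f k + f l + (\<Sum>i\<in>UNIV - {k} - {l}. f i)"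
    using assms by (simp add: sum.remove[of UNIV k] sum.remove[of "UNIV - {k}" l])
  have rest: "(\<Sum>i\<in>UNIV - {k} - {l}. (tt v (hada k l ** R) i)\<^sup>2) = (\<Sum>i\<in>UNIV - {k} - {l}. (tt v R i)\<^sup>2)"
    using assms by (intro sum.cong refl) (simp add: tt_hada_other)
  show ?thesis
    unfolding phi_def split[of "\<lambda>i. (tt v (hada k l ** R) i)\<^sup>2"] split[of "\<lambda>i. (tt v R i)\<^sup>2"] rest
    using assms by (simp add: tt_hada_k tt_hada_l) (simp add: power2_eq_square field_simps)
qed

lemma deriv_g:
  assumes "0 < x" "m \<noteq> 0"
  shows "((\<lambda>x. x - 1 - (x - 1)\<^sup>2 / (2 * m\<^sup>2) - ln x) has_real_derivative
           (1 - (x - 1) / m\<^sup>2 - 1 / x)) (at x)"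
  using assms
  by (auto intro!: derivative_eq_intros simp: field_simps power2_eq_square)

lemma ln_upper:
  fixes t m :: real
  assumes t: "0 < t" "t \<le> m" and m: "1 \<le> m"
  shows "ln t \<le> t - 1 - (t - 1)\<^sup>2 / (2 * m\<^sup>2)"
proof -
  define g where "g = (\<lambda>x::real. x - 1 - (x - 1)\<^sup>2 / (2 * m\<^sup>2) - ln x)"
  have g1: "g 1 = 0" by (simp add: g_def)
  have mm: "m \<le> m\<^sup>2" using m by (simp add: power2_eq_square)
  have "0 \<le> g t"
  proof (cases "1 \<le> t")
    case True
    have "g 1 \<le> g t"
    proof (rule DERIV_nonneg_imp_nondecreasing[OF True])
      fix x assume x: "1 \<le> x" "x \<le> t"
      have "(x - 1) / m\<^sup>2 \<le> (x - 1) / x"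
        using x t m mm by (intro divide_left_mono) auto
      then have "0 \<le> 1 - (x - 1) / m\<^sup>2 - 1 / x"
        using x by (simp add: diff_divide_distrib)
      then show "\<exists>y. (g has_real_derivative y) (at x) \<and> 0 \<le> y"
        unfolding g_def using deriv_g[of x m] x m by auto
    qed
    then show ?thesis using g1 by simp
  next
    case False
    have "g 1 \<le> g t"
    proof (rule DERIV_nonpos_imp_nonincreasing[of t 1 g])
      show "t \<le> 1" using False by simp
      fix x assume x: "t \<le> x" "x \<le> 1"
      have m2: "1 \<le> m\<^sup>2" using m mm by linarith
      have a: "(1 - x) / m\<^sup>2 \<le> (1 - x) / 1"
        using x m2 by (intro divide_left_mono) auto
      have e: "(x - 1) / m\<^sup>2 = - ((1 - x) / m\<^sup>2)" by (simp add: divide_simps)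
      have sq: "0 \<le> (x - 1)\<^sup>2" by simp
      have "(2 - x) * x \<le> 1" using sq by (simp add: power2_eq_square algebra_simps)
      then have b: "2 - x \<le> 1 / x" using x t by (simp add: le_divide_eq)
      moreover note a e
      ultimately have "1 - (x - 1) / m\<^sup>2 - 1 / x \<le> 0" unfolding div_by_1 by linarith
      then show "\<exists>y. (g has_real_derivative y) (at x) \<and> y \<le> 0"
        unfolding g_def using deriv_g[of x m] x t m by auto
    qed
    then show ?thesis using g1 by simp
  qed
  then show ?thesis unfolding g_def by simp
qed

lemma ln_lower:
  fixes t m :: real
  assumes t: "m \<le> t" and m: "0 < m" "m \<le> 1"
  shows "t - 1 - (t - 1)\<^sup>2 / (2 * m\<^sup>2) \<le> ln t"
proof -
  define g where "g = (\<lambda>x::real. x - 1 - (x - 1)\<^sup>2 / (2 * m\<^sup>2) - ln x)"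
  have g1: "g 1 = 0" by (simp add: g_def)
  have mm: "m\<^sup>2 \<le> m" using m by (simp add: power2_eq_square mult_left_le)
  have m2: "m\<^sup>2 \<le> 1" "0 < m\<^sup>2" using m mm by auto
  have "g t \<le> 0"
  proof (cases "1 \<le> t")
    case True
    have "g t \<le> g 1"
    proof (rule DERIV_nonpos_imp_nonincreasing[of 1 t g, OF True])
      fix x assume x: "1 \<le> x" "x \<le> t"
      have a: "(x - 1) / 1 \<le> (x - 1) / m\<^sup>2"
        using x m2 by (intro divide_left_mono) auto
      have sq: "0 \<le> (x - 1)\<^sup>2" by simp
      have "(2 - x) * x \<le> 1" using sq by (simp add: power2_eq_square algebra_simps)
      then have b: "2 - x \<le> 1 / x" using x by (simp add: le_divide_eq)
      from a b have "1 - (x - 1) / m\<^sup>2 - 1 / x \<le> 0" unfolding div_by_1 by linarith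
      then show "\<exists>y. (g has_real_derivative y) (at x) \<and> y \<le> 0"
        unfolding g_def using deriv_g[of x m] x m by auto
    qed
    then show ?thesis using g1 by simp
  next
    case False
    have "g t \<le> g 1"
    proof (rule DERIV_nonneg_imp_nondecreasing[of t 1 g])
      show "t \<le> 1" using False by simp
      fix x assume x: "t \<le> x" "x \<le> 1"
      have xp: "0 < x" using x t m by linarith
      have a: "(1 - x) / x \<le> (1 - x) / m\<^sup>2"
        using x t m2 mm xp by (intro divide_left_mono) auto
      have e1: "(x - 1) / m\<^sup>2 = - ((1 - x) / m\<^sup>2)" by (simp add: divide_simps)
      have e2: "1 - 1 / x = - ((1 - x) / x)" using xp by (simp add: divide_simps)
      have "0 \<le> 1 - (x - 1) / m\<^sup>2 - 1 / x" using a e1 e2 by linarith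
      then show "\<exists>y. (g has_real_derivative y) (at x) \<and> 0 \<le> y"
        unfolding g_def using deriv_g[of x m] xp m by auto
    qed
    then show ?thesis using g1 by simp
  qed
  then show ?thesis unfolding g_def by simp
qed

lemma sum_sq_diff:
  fixes t :: "'n::finite \<Rightarrow> real"
  shows "(\<Sum>k\<in>UNIV. \<Sum>l\<in>UNIV. (t k - t l)\<^sup>2) =
         2 * real CARD('n) * (\<Sum>i\<in>UNIV. (t i)\<^sup>2) - 2 * (\<Sum>i\<in>UNIV. t i)\<^sup>2"
proof -
  have "(\<Sum>k\<in>UNIV. \<Sum>l\<in>UNIV. (t k - t l)\<^sup>2) =
        (\<Sum>k\<in>UNIV. \<Sum>l\<in>UNIV. (t k)\<^sup>2 + (t l)\<^sup>2 - 2 * (t k * t l))"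
    by (intro sum.cong refl) (simp add: power2_diff mult.assoc)
  also have "\<dots> = (\<Sum>k\<in>UNIV. real CARD('n) * (t k)\<^sup>2 + (\<Sum>l\<in>UNIV. (t l)\<^sup>2) - 2 * (t k * (\<Sum>l\<in>UNIV. t l)))"
    by (intro sum.cong refl) (simp add: sum.distrib sum_subtractf sum_distrib_left[symmetric])
  also have "\<dots> = 2 * real CARD('n) * (\<Sum>i\<in>UNIV. (t i)\<^sup>2) - 2 * (\<Sum>i\<in>UNIV. t i)\<^sup>2"
  proof -
    have "(\<Sum>k\<in>UNIV. real CARD('n) * (t k)\<^sup>2 + (\<Sum>l\<in>UNIV. (t l)\<^sup>2) - 2 * (t k * (\<Sum>l\<in>UNIV. t l)))
      = real CARD('n) * (\<Sum>k\<in>UNIV. (t k)\<^sup>2) + real CARD('n) * (\<Sum>l\<in>UNIV. (t l)\<^sup>2)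
        - 2 * ((\<Sum>k\<in>UNIV. t k) * (\<Sum>l\<in>UNIV. t l))"
      by (simp only: sum.distrib sum_subtractf sum_distrib_left[symmetric] sum_distrib_right[symmetric]) simp
    then show ?thesis by (simp add: power2_eq_square)
  qed
  finally show ?thesis .
qed

lemma sum_offdiag:
  fixes X :: "'n::finite \<Rightarrow> 'n \<Rightarrow> real"
  shows "(\<Sum>k\<in>UNIV. \<Sum>l\<in>UNIV. (if k = l then 0 else X k l)) =
         (\<Sum>k\<in>UNIV. \<Sum>l\<in>UNIV. X k l) - (\<Sum>k\<in>UNIV. X k k)"
proof -
  have "\<And>k. (\<Sum>l\<in>UNIV. (if k = l then 0 else X k l)) = (\<Sum>l\<in>UNIV. X k l) - X k k"
  proof -
    fix k
    have "(\<Sum>l\<in>UNIV. (if k = l then 0 else X k l)) = (\<Sum>l\<in>UNIV. X k l - (if k = l then X k l else 0))"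
      by (intro sum.cong refl) auto
    then show "(\<Sum>l\<in>UNIV. (if k = l then 0 else X k l)) = (\<Sum>l\<in>UNIV. X k l) - X k k"
      by (simp add: sum_subtractf)
  qed
  then show ?thesis by (simp add: sum_subtractf)
qed

lemma offdiag_identity:
  fixes R :: "real^'n^'n"
  assumes "orthogonal_matrix R"
  shows "(\<Sum>k\<in>UNIV. \<Sum>l\<in>UNIV. (if k = l then 0 else 2 * (AA v R k l)\<^sup>2 - (tt v R k - tt v R l)\<^sup>2 / 2)) =
         2 * (\<Sum>j\<in>UNIV. (v $ j)\<^sup>2) - (real CARD('n) + 2) * phi v R + (\<Sum>j\<in>UNIV. v $ j)\<^sup>2"
proof -
  have "(\<Sum>k\<in>UNIV. \<Sum>l\<in>UNIV. 2 * (AA v R k l)\<^sup>2 - (tt v R k - tt v R l)\<^sup>2 / 2) =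
        2 * (\<Sum>k\<in>UNIV. \<Sum>l\<in>UNIV. (AA v R k l)\<^sup>2) - (\<Sum>k\<in>UNIV. \<Sum>l\<in>UNIV. (tt v R k - tt v R l)\<^sup>2) / 2"
    by (simp add: sum_subtractf sum_distrib_left sum_divide_distrib)
  also have "\<dots> = 2 * (\<Sum>j\<in>UNIV. (v $ j)\<^sup>2) - (real CARD('n) * phi v R - (\<Sum>j\<in>UNIV. v $ j)\<^sup>2)"
    unfolding sum_AA_sq[OF assms] sum_sq_diff sum_tt[OF assms] phi_def by (simp add: field_simps)
  finally have main: "(\<Sum>k\<in>UNIV. \<Sum>l\<in>UNIV. 2 * (AA v R k l)\<^sup>2 - (tt v R k - tt v R l)\<^sup>2 / 2) =
     2 * (\<Sum>j\<in>UNIV. (v $ j)\<^sup>2) - (real CARD('n) * phi v R - (\<Sum>j\<in>UNIV. v $ j)\<^sup>2)" .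
  have diag: "(\<Sum>k\<in>UNIV. 2 * (AA v R k k)\<^sup>2 - (tt v R k - tt v R k)\<^sup>2 / 2) = 2 * phi v R"
    by (simp add: AA_diag phi_def sum_distrib_left)
  show ?thesis
    unfolding sum_offdiag[where X = "\<lambda>k l. 2 * (AA v R k l)\<^sup>2 - (tt v R k - tt v R l)\<^sup>2 / 2"]
      main diag by (simp add: algebra_simps)
qed

lemma cont_tt: "continuous_on UNIV (\<lambda>R::real^'n^'n. tt v R i)"
  unfolding tt_def by (intro continuous_intros)

lemma cont_phi: "continuous_on UNIV (\<lambda>R::real^'n^'n. phi v R)"
  unfolding phi_def by (intro continuous_intros cont_tt)

lemma cont_mmult: "continuous_on UNIV (\<lambda>R::real^'n^'n. Q ** R)"
  unfolding matrix_matrix_mult_def by (intro continuous_intros)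

lemma sum_sq_minus_one:
  fixes t :: "'n::finite \<Rightarrow> real"
  shows "(\<Sum>i\<in>UNIV. (t i - 1)\<^sup>2) = (\<Sum>i\<in>UNIV. (t i)\<^sup>2) - 2 * (\<Sum>i\<in>UNIV. t i) + real CARD('n)"
  by (simp add: power2_diff sum.distrib sum_subtractf sum_distrib_left)

lemma phi_bound:
  fixes R :: "real^'n^'n"
  assumes "orthogonal_matrix R" "\<And>j. a \<le> v $ j" "\<And>j. v $ j \<le> b" "0 \<le> a"
  shows "\<bar>phi v R\<bar> \<le> real CARD('n) * b\<^sup>2"
proof -
  have "\<And>i. 0 \<le> tt v R i \<and> tt v R i \<le> b"
    using tt_bounds[OF assms(1-3)] assms(4) by (meson order_trans)
  then have "\<And>i. (tt v R i)\<^sup>2 \<le> b\<^sup>2" by (meson power_mono)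
  then have "phi v R \<le> (\<Sum>i\<in>(UNIV::'n set). b\<^sup>2)" unfolding phi_def by (intro sum_mono) auto
  moreover have "0 \<le> phi v R" unfolding phi_def by (intro sum_nonneg) auto
  ultimately show ?thesis by simp
qed

lemma L_bound:
  fixes R :: "real^'n^'n"
  assumes "orthogonal_matrix R" "\<And>j. a \<le> v $ j" "\<And>j. v $ j \<le> b" "0 < a" "a \<le> 1" "1 \<le> b"
  shows "\<bar>\<Sum>i\<in>UNIV. ln (tt v R i)\<bar> \<le> real CARD('n) * (ln b - ln a)"
proof -
  have "\<And>i. \<bar>ln (tt v R i)\<bar> \<le> ln b - ln a"
  proof -
    fix i
    have t: "a \<le> tt v R i" "tt v R i \<le> b" using tt_bounds[OF assms(1-3)] by auto
    have "ln a \<le> ln (tt v R i)" "ln (tt v R i) \<le> ln b" using t assms(4) by auto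
    moreover have "ln a \<le> 0" "0 \<le> ln b" using assms(4-6) by auto
    ultimately show "\<bar>ln (tt v R i)\<bar> \<le> ln b - ln a" by linarith
  qed
  then have "\<bar>\<Sum>i\<in>UNIV. ln (tt v R i)\<bar> \<le> (\<Sum>i\<in>(UNIV::'n set). ln b - ln a)"
    by (intro order_trans[OF sum_abs] sum_mono) auto
  then show ?thesis by simp
qed

theorem lemma2:
  fixes \<nu> :: "real^'n" and \<kappa> :: real and M :: "(real^'n^'n) measure"
  assumes pos: "\<And>i. \<nu> $ i > 0"
    and sum_d: "(\<Sum>i\<in>UNIV. \<nu> $ i) = real CARD('n)"
    and kappa_ge: "\<kappa> \<ge> 1"
    and cond: "Max (range (\<lambda>i. \<nu> $ i)) / Min (range (\<lambda>i. \<nu> $ i)) \<le> \<kappa>"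
    and haar: "haar_orthogonal M"
  shows "(\<integral>R. (\<Sum>i\<in>UNIV. ln (\<Sum>j\<in>UNIV. (R $ i $ j)\<^sup>2 * \<nu> $ j)) \<partial>M)
           \<le> 2 / ((real CARD('n) + 2) * \<kappa>\<^sup>2) * (\<Sum>i\<in>UNIV. ln (\<nu> $ i))"
proof -
  interpret P: prob_space M using haar unfolding haar_orthogonal_def by blast
  have sM: "sets M = sets borel" using haar unfolding haar_orthogonal_def by blast
  have AEo: "AE R in M. orthogonal_matrix R" using haar unfolding haar_orthogonal_def by blast
  have inv: "\<And>Q. orthogonal_matrix Q \<Longrightarrow> distr M M (\<lambda>R. Q ** R) = M"
    using haar unfolding haar_orthogonal_def by blast
  have measM: "\<And>f::real^'n^'n \<Rightarrow> real. continuous_on UNIV f \<Longrightarrow> f \<in> borel_measurable M"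
    using measurable_cong_sets[OF sM refl] borel_measurable_continuous_onI by blast
  have measMM: "\<And>Q::real^'n^'n. (\<lambda>R. Q ** R) \<in> measurable M M"
    using measurable_cong_sets[OF sM sM] borel_measurable_continuous_onI[OF cont_mmult] by blast
  define d where "d = real CARD('n)"
  define m where "m = Max (range (\<lambda>i. \<nu> $ i))"
  define \<mu> where "\<mu> = Min (range (\<lambda>i. \<nu> $ i))"
  define S2 where "S2 = (\<Sum>j\<in>UNIV. (\<nu> $ j)\<^sup>2)"
  have dpos: "0 < d" unfolding d_def by simp
  have le_m: "\<And>j. \<nu> $ j \<le> m" unfolding m_def by (intro Max_ge) auto
  have ge_mu: "\<And>j. \<mu> \<le> \<nu> $ j" unfolding \<mu>_def by (intro Min_le) auto
  have mu_pos: "0 < \<mu>"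
  proof -
    have "\<mu> \<in> range (\<lambda>i. \<nu> $ i)" unfolding \<mu>_def by (intro Min_in) auto
    then show ?thesis using pos by auto
  qed
  have m1: "1 \<le> m"
  proof -
    have "d \<le> (\<Sum>j\<in>(UNIV::'n set). m)" unfolding d_def sum_d[symmetric] by (intro sum_mono le_m)
    then have "d * 1 \<le> d * m" by (simp add: d_def)
    then show ?thesis using dpos by simp
  qed
  have mu1: "\<mu> \<le> 1"
  proof -
    have "(\<Sum>j\<in>(UNIV::'n set). \<mu>) \<le> d" unfolding d_def sum_d[symmetric] by (intro sum_mono ge_mu)
    then have "d * \<mu> \<le> d * 1" by (simp add: d_def)
    then show ?thesis using dpos by simp
  qed
  have mk: "m \<le> \<kappa> * \<mu>"
    using cond mu_pos unfolding m_def[symmetric] \<mu>_def[symmetric] by (simp add: divide_le_eq)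
  have mu0: "0 \<le> \<mu>" using mu_pos by simp

  have int_phi: "integrable M (\<lambda>R. phi \<nu> R)"
    by (rule P.integrable_const_bound[where B = "d * m\<^sup>2"])
       (use AEo phi_bound[OF _ ge_mu le_m mu0] in \<open>auto simp: d_def intro: measM cont_phi\<close>)
  have int_phiQ: "integrable M (\<lambda>R. phi \<nu> (Q ** R))" if "orthogonal_matrix Q" for Q
  proof (rule P.integrable_const_bound[where B = "d * m\<^sup>2"])
    show "AE x in M. norm (phi \<nu> (Q ** x)) \<le> d * m\<^sup>2"
      using AEo by eventually_elim
        (use phi_bound[OF _ ge_mu le_m mu0] orthogonal_matrix_mul[OF that] in \<open>auto simp: d_def\<close>)
    show "(\<lambda>R. phi \<nu> (Q ** R)) \<in> borel_measurable M"
      by (rule measurable_compose[OF measMM measM[OF cont_phi]])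
  qed
  have int_L: "integrable M (\<lambda>R. \<Sum>i\<in>UNIV. ln (tt \<nu> R i))"
  proof (rule P.integrable_const_bound[where B = "d * (ln m - ln \<mu>)"])
    show "AE x in M. norm (\<Sum>i\<in>UNIV. ln (tt \<nu> x i)) \<le> d * (ln m - ln \<mu>)"
      using AEo by eventually_elim
        (use L_bound[OF _ ge_mu le_m mu_pos mu1 m1] in \<open>auto simp: d_def\<close>)
    have "(\<lambda>R. \<Sum>i\<in>UNIV. ln (tt \<nu> R i)) \<in> borel_measurable borel"
      by (intro borel_measurable_sum borel_measurable_ln borel_measurable_continuous_onI cont_tt)
    then show "(\<lambda>R. \<Sum>i\<in>UNIV. ln (tt \<nu> R i)) \<in> borel_measurable M"
      using measurable_cong_sets[OF sM refl] by blast
  qed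

  have invphi: "(\<integral>R. phi \<nu> (Q ** R) \<partial>M) = (\<integral>R. phi \<nu> R \<partial>M)" if "orthogonal_matrix Q" for Q
  proof -
    have "(\<integral>R. phi \<nu> R \<partial>M) = (\<integral>R. phi \<nu> R \<partial>(distr M M (\<lambda>R. Q ** R)))"
      using inv[OF that] by simp
    also have "\<dots> = (\<integral>R. phi \<nu> (Q ** R) \<partial>M)"
      by (rule integral_distr[OF measMM measM[OF cont_phi]])
    finally show ?thesis by simp
  qed

  define D where "D = (\<lambda>R. \<Sum>k\<in>UNIV. \<Sum>l\<in>UNIV. (if k = l then 0 else phi \<nu> (hada k l ** R) - phi \<nu> R))"
  have intD: "\<And>k l. integrable M (\<lambda>R. if k = l then 0 else phi \<nu> (hada k l ** R) - phi \<nu> R)"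
  proof -
    fix k l :: 'n
    show "integrable M (\<lambda>R. if k = l then 0 else phi \<nu> (hada k l ** R) - phi \<nu> R)"
    proof (cases "k = l")
      case False
      then show ?thesis using int_phiQ[OF hada_orth[OF False]] int_phi by simp
    qed simp
  qed
  have intD2: "\<And>k. integrable M (\<lambda>R. \<Sum>l\<in>UNIV. (if k = l then 0 else phi \<nu> (hada k l ** R) - phi \<nu> R))"
    by (rule Bochner_Integration.integrable_sum) (rule intD)
  have D0: "(\<integral>R. D R \<partial>M) = 0"
  proof -
    have "(\<integral>R. D R \<partial>M) = (\<Sum>k\<in>UNIV. \<Sum>l\<in>UNIV. \<integral>R. (if k = l then 0 else phi \<nu> (hada k l ** R) - phi \<nu> R) \<partial>M)"
      unfolding D_def using intD intD2 by (simp add: integral_sum)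
    also have "\<dots> = 0"
    proof (intro sum.neutral ballI)
      fix k l :: 'n
      show "(\<integral>R. (if k = l then 0 else phi \<nu> (hada k l ** R) - phi \<nu> R) \<partial>M) = 0"
      proof (cases "k = l")
        case False
        then show ?thesis
          using invphi[OF hada_orth[OF False]] int_phiQ[OF hada_orth[OF False]] int_phi by simp
      qed simp
    qed
    finally show ?thesis .
  qed
  have DAE: "AE R in M. D R = 2 * S2 + d\<^sup>2 - (d + 2) * phi \<nu> R"
    using AEo
  proof eventually_elim
    case (elim R)
    have "D R = (\<Sum>k\<in>UNIV. \<Sum>l\<in>UNIV. (if k = l then 0 else 2 * (AA \<nu> R k l)\<^sup>2 - (tt \<nu> R k - tt \<nu> R l)\<^sup>2 / 2))"
      unfolding D_def by (intro sum.cong refl) (simp add: phi_hada)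
    also have "\<dots> = 2 * S2 + d\<^sup>2 - (d + 2) * phi \<nu> R"
      unfolding offdiag_identity[OF elim] S2_def d_def sum_d by simp
    finally show ?case .
  qed
  have Ephi: "(d + 2) * (\<integral>R. phi \<nu> R \<partial>M) = 2 * S2 + d\<^sup>2"
  proof -
    have "0 = (\<integral>R. 2 * S2 + d\<^sup>2 - (d + 2) * phi \<nu> R \<partial>M)"
    proof -
      have iD: "integrable M D" unfolding D_def
        by (rule Bochner_Integration.integrable_sum) (rule intD2)
      have "(\<integral>R. D R \<partial>M) = (\<integral>R. 2 * S2 + d\<^sup>2 - (d + 2) * phi \<nu> R \<partial>M)"
        by (rule integral_cong_AE[OF borel_measurable_integrable[OF iD] _ DAE])
           (rule borel_measurable_integrable, use int_phi in simp)
      then show ?thesis using D0 by simp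
    qed
    also have "\<dots> = 2 * S2 + d\<^sup>2 - (d + 2) * (\<integral>R. phi \<nu> R \<partial>M)"
      using int_phi by (simp add: P.prob_space)
    finally show ?thesis by simp
  qed
  have pw: "AE R in M. (\<Sum>i\<in>UNIV. ln (tt \<nu> R i)) \<le> (1 / (2 * m\<^sup>2)) * (d - phi \<nu> R)"
    using AEo
  proof eventually_elim
    case (elim R)
    have "(\<Sum>i\<in>UNIV. ln (tt \<nu> R i)) \<le> (\<Sum>i\<in>UNIV. tt \<nu> R i - 1 - (tt \<nu> R i - 1)\<^sup>2 / (2 * m\<^sup>2))"
    proof (intro sum_mono)
      fix i
      have "\<mu> \<le> tt \<nu> R i" "tt \<nu> R i \<le> m" using tt_bounds[OF elim ge_mu le_m] by auto
      then show "ln (tt \<nu> R i) \<le> tt \<nu> R i - 1 - (tt \<nu> R i - 1)\<^sup>2 / (2 * m\<^sup>2)"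
        using mu_pos m1 by (intro ln_upper) auto
    qed
    also have "\<dots> = (\<Sum>i\<in>UNIV. tt \<nu> R i) - d - (\<Sum>i\<in>UNIV. (tt \<nu> R i - 1)\<^sup>2) / (2 * m\<^sup>2)"
      by (simp add: sum_subtractf sum_divide_distrib d_def)
    also have "\<dots> = (1 / (2 * m\<^sup>2)) * (d - phi \<nu> R)"
      unfolding sum_sq_minus_one sum_tt[OF elim] sum_d phi_def[symmetric] d_def[symmetric]
      by (simp add: divide_simps)
    finally show ?case .
  qed
  have int_rhs: "integrable M (\<lambda>R. (1 / (2 * m\<^sup>2)) * (d - phi \<nu> R))"
    using int_phi by simp
  have step1: "(\<integral>R. (\<Sum>i\<in>UNIV. ln (tt \<nu> R i)) \<partial>M) \<le> (1 / (2 * m\<^sup>2)) * (d - (\<integral>R. phi \<nu> R \<partial>M))"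
  proof -
    have "(\<integral>R. (\<Sum>i\<in>UNIV. ln (tt \<nu> R i)) \<partial>M) \<le> (\<integral>R. (1 / (2 * m\<^sup>2)) * (d - phi \<nu> R) \<partial>M)"
      by (rule integral_mono_AE[OF int_L int_rhs pw])
    also have "\<dots> = (1 / (2 * m\<^sup>2)) * (d - (\<integral>R. phi \<nu> R \<partial>M))"
      using int_phi by (simp add: P.prob_space)
    finally show ?thesis .
  qed
  define X where "X = S2 - d"
  have X_eq: "X = (\<Sum>j\<in>UNIV. (\<nu> $ j - 1)\<^sup>2)"
    unfolding X_def S2_def sum_sq_minus_one[of "\<lambda>j. \<nu> $ j"] sum_d d_def by simp
  have X0: "0 \<le> X" unfolding X_eq by (intro sum_nonneg) auto
  have I_eq: "d - (\<integral>R. phi \<nu> R \<partial>M) = - 2 * X / (d + 2)"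
    using Ephi dpos unfolding X_def by (simp add: field_simps power2_eq_square)
  have lhs_eq: "(1 / (2 * m\<^sup>2)) * (d - (\<integral>R. phi \<nu> R \<partial>M)) = - (X / ((d + 2) * m\<^sup>2))"
    unfolding I_eq using m1 dpos by (simp add: field_simps)
  have lnsum: "- X / (2 * \<mu>\<^sup>2) \<le> (\<Sum>i\<in>UNIV. ln (\<nu> $ i))"
  proof -
    have "(\<Sum>i\<in>UNIV. \<nu> $ i - 1 - (\<nu> $ i - 1)\<^sup>2 / (2 * \<mu>\<^sup>2)) \<le> (\<Sum>i\<in>UNIV. ln (\<nu> $ i))"
      by (intro sum_mono ln_lower ge_mu mu_pos mu1)
    moreover have "(\<Sum>i\<in>UNIV. \<nu> $ i - 1 - (\<nu> $ i - 1)\<^sup>2 / (2 * \<mu>\<^sup>2)) = - X / (2 * \<mu>\<^sup>2)"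
      unfolding X_eq by (simp add: sum_subtractf sum_divide_distrib sum_d)
    ultimately show ?thesis by simp
  qed
  have kpos: "0 < \<kappa>" using kappa_ge by simp
  have c_pos: "0 < 2 / ((d + 2) * \<kappa>\<^sup>2)" using dpos kpos by simp
  have "2 / ((d + 2) * \<kappa>\<^sup>2) * (- X / (2 * \<mu>\<^sup>2)) \<le> 2 / ((d + 2) * \<kappa>\<^sup>2) * (\<Sum>i\<in>UNIV. ln (\<nu> $ i))"
    using lnsum c_pos by (intro mult_left_mono) auto
  moreover have "2 / ((d + 2) * \<kappa>\<^sup>2) * (- X / (2 * \<mu>\<^sup>2)) = - (X / ((d + 2) * (\<kappa> * \<mu>)\<^sup>2))"
    using mu_pos kpos dpos by (simp add: field_simps power2_eq_square)
  moreover have "X / ((d + 2) * (\<kappa> * \<mu>)\<^sup>2) \<le> X / ((d + 2) * m\<^sup>2)"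
  proof (rule divide_left_mono[OF _ X0])
    have "m\<^sup>2 \<le> (\<kappa> * \<mu>)\<^sup>2" using mk m1 by (intro power_mono) auto
    then show "(d + 2) * m\<^sup>2 \<le> (d + 2) * (\<kappa> * \<mu>)\<^sup>2" using dpos by (intro mult_left_mono) auto
    show "0 < (d + 2) * (\<kappa> * \<mu>)\<^sup>2 * ((d + 2) * m\<^sup>2)" using dpos m1 kpos mu_pos by simp
  qed
  ultimately have fin: "(1 / (2 * m\<^sup>2)) * (d - (\<integral>R. phi \<nu> R \<partial>M)) \<le> 2 / ((d + 2) * \<kappa>\<^sup>2) * (\<Sum>i\<in>UNIV. ln (\<nu> $ i))"
    unfolding lhs_eq by linarith
  have feq: "(\<lambda>R::real^'n^'n. \<Sum>i\<in>UNIV. ln (\<Sum>j\<in>UNIV. (R $ i $ j)\<^sup>2 * \<nu> $ j)) = (\<lambda>R. \<Sum>i\<in>UNIV. ln (tt \<nu> R i))"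
    by (simp add: tt_def)
  show ?thesis unfolding feq using step1 fin unfolding d_def by linarith
qed

end
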